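(* Let $f:\mathbb{R}^{n_x}\to\mathbb{R}^{n_y}$ be a deterministic score predictor and let $\bar D:\mathbb{R}^{n_x}\to\mathbb{R}^{n_y\times n_u}$ be given. Fix $G_u\in\mathbb{R}^{n_u\times\nu}$, an integer $n_r\ge1$, orthogonal matrices $R_1,\dots,R_{n_r}\in\mathbb{R}^{n_y\times n_y}$ and $R_0=\mathbf I$. For $\alpha\in\mathbb{R}^\nu_{\ge0}$ let $\mathcal Y_\alpha(x)=\{f(x)+\bar D(x)u\mid u\in\langle\mathbf 0,G_u\mathrm{diag}(\alpha)\rangle\}$. Given data $(x^{(m)},y^{(m)})$, $m\in\mathcal M_{\mathrm{cal}}$, where each $y^{(m)}\in\{0,1\}^{n_y}$ is a unit vector $e_{k_m}$ (so $\mathrm{classes}(y^{(m)})=\{k_m\}$), let $T_m\in\mathbb{R}^{n_y\times n_y}$ be the matrix each of whose rows equals $e_{k_m}^\top$, minus the identity, i.e. $T_m=\mathbf 1e_{k_m}^\top-\mathbf I$. Consider the linear program in $\alpha\in\mathbb{R}^\nu$ and $\beta_m\in\mathbb{R}^\nu$: $$\min_{\alpha,\beta}\ \sum_{m\in\mathcal M_{\mathrm{cal}}}\sum_{i=0}^{n_r}\mathbf 1^\top\bigl|R_i\bar D(x^{(m)})G_u\bigr|\alpha$$ subject to, for all $m$: $\mathbf 0\le\alpha$, $\mathbf 0\le\alpha+\beta_m$, $\mathbf 0\le\alpha-\beta_m$, and $-T_mf(x^{(m)})\le T_m\bar D(x^{(m)})G_u\beta_m$. If $(\alpha^*,\beta^*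 )$ is an optimal solution of this linear program, then $\alpha^*$ is an optimal solution of $$\min_{\alpha\in\mathbb{R}^\nu_{\ge0}}\sum_{m}\sum_{i=0}^{n_r}\|R_i\mathcal Y_\alpha(x^{(m)})\|_I\quad\text{s.t.}\quad \mathrm{classes}(y^{(m)})\subseteq\mathrm{classes}(\mathcal Y_\alpha(x^{(m)}))\ \ \forall m\in\mathcal M_{\mathrm{cal}}.$$
   Context: $\langle c,G\rangle=\{c+G\lambda\mid\lambda\in[-1,1]^\nu\}$ denotes a zonotope; its interval norm is $\|\langle c,G\rangle\|_I=\mathbf 1^\top|G|\mathbf 1$ ($|\cdot|$ elementwise), with $R\langle c,G\rangle=\langle Rc,RG\rangle$, so $\|R_i\mathcal Y_\alpha(x)\|_I=\mathbf 1^\top|R_i\bar D(x)G_u\mathrm{diag}(\alpha)|\mathbf 1$. For a set $\mathcal Y\subseteq\mathbb{R}^{n_y}$, $\mathrm{classes}(\mathcal Y)=\{i\mid\exists y\in\mathcal Y: y_{(i)}=\max_j y_{(j)}\}$, and for a vector $y$, $\mathrm{classes}(y)=\{i\mid y_{(i)}=\max_jy_{(j)}\}$. Inequalities between vectors are elementwise. *)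

theory Defs
  imports "HOL-Analysis.Analysis"
begin

definition zonotope :: "real^'n \<Rightarrow> real^'v^'n \<Rightarrow> (real^'n) set" where
  "zonotope c G = {c + G *v l | l. \<forall>j. \<bar>l $ j\<bar> \<le> 1}"

text \<open>Interval norm of a zonotope given by its generator matrix: 1^T |G| 1.\<close>
definition interval_norm :: "real^'v^'n \<Rightarrow> real" where
  "interval_norm G = (\<Sum>r\<in>UNIV. \<Sum>j\<in>UNIV. \<bar>G $ r $ j\<bar>)"

definition diag_mat :: "real^'v \<Rightarrow> real^'v^'v" where
  "diag_mat a = (\<chi> i j. if i = j then a $ i else 0)"

definition classes_set :: "(real^'n) set \<Rightarrow> 'n set" where
  "classes_set Y = {i. \<exists>y\<in>Y. \<forall>j. y $ j \<le> y $ i}"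

definition classes_vec :: "real^'n \<Rightarrow> 'n set" where
  "classes_vec y = {i. \<forall>j. y $ j \<le> y $ i}"

definition Yset :: "('x \<Rightarrow> real^'y) \<Rightarrow> ('x \<Rightarrow> real^'u^'y) \<Rightarrow> real^'v^'u
     \<Rightarrow> real^'v \<Rightarrow> 'x \<Rightarrow> (real^'y) set" where
  "Yset f D G a x = {f x + D x *v u | u. u \<in> zonotope 0 (G ** diag_mat a)}"

text \<open>Zonotope-size objective: sum_m sum_{i=0}^{n_r} || R_i Y_alpha(x_m) ||_I, where
  R_i <f x, D x G diag a> = <R_i f x, R_i D x G diag a>.\<close>
definition zono_obj :: "'m set \<Rightarrow> ('m \<Rightarrow> 'x) \<Rightarrow> ('x \<Rightarrow> real^'u^'y) \<Rightarrow> real^'v^'u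
     \<Rightarrow> nat \<Rightarrow> (nat \<Rightarrow> real^'y^'y) \<Rightarrow> real^'v \<Rightarrow> real" where
  "zono_obj M xs D G nr R a =
     (\<Sum>m\<in>M. \<Sum>i\<in>{0..nr}. interval_norm (R i ** D (xs m) ** G ** diag_mat a))"

definition lp_obj :: "'m set \<Rightarrow> ('m \<Rightarrow> 'x) \<Rightarrow> ('x \<Rightarrow> real^'u^'y) \<Rightarrow> real^'v^'u
     \<Rightarrow> nat \<Rightarrow> (nat \<Rightarrow> real^'y^'y) \<Rightarrow> real^'v \<Rightarrow> real" where
  "lp_obj M xs D G nr R a =
     (\<Sum>m\<in>M. \<Sum>i\<in>{0..nr}. \<Sum>r\<in>UNIV. \<Sum>j\<in>UNIV. \<bar>(R i ** D (xs m) ** G) $ r $ j\<bar> * a $ j)"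

definition Tmat :: "'y \<Rightarrow> real^'y^'y" where
  "Tmat k = (\<chi> r c. if c = k then 1 else 0) - mat 1"

definition lp_feasible :: "'m set \<Rightarrow> ('m \<Rightarrow> 'x) \<Rightarrow> ('m \<Rightarrow> 'y) \<Rightarrow> ('x \<Rightarrow> real^'y)
     \<Rightarrow> ('x \<Rightarrow> real^'u^'y) \<Rightarrow> real^'v^'u \<Rightarrow> real^'v \<Rightarrow> ('m \<Rightarrow> real^'v) \<Rightarrow> bool" where
  "lp_feasible M xs k f D G a b \<longleftrightarrow>
     0 \<le> a \<and> (\<forall>m\<in>M. 0 \<le> a + b m \<and> 0 \<le> a - b m \<and>
        - (Tmat (k m) *v f (xs m)) \<le> (Tmat (k m) ** D (xs m) ** G) *v b m)"

end

theory Submission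
  imports Defs
begin

lemma if0_mult: "((if P then x else 0) * (y::real)) = (if P then x * y else 0)"
  "((y::real) * (if P then x else 0)) = (if P then y * x else 0)" by auto

lemma Tmat_mulv: "(Tmat k *v v) $ j = v $ k - v $ j"
proof -
  have "(Tmat k *v v) $ j = (\<Sum>c\<in>UNIV. (if c = k then v $ c else 0) - (if j = c then v $ c else 0))"
    by (auto simp: Tmat_def matrix_vector_mult_def mat_def left_diff_distrib intro!: sum.cong)
  also have "\<dots> = v $ k - v $ j" by (simp add: sum_subtractf)
  finally show ?thesis .
qed
lemma diag_mulv: "(G ** diag_mat a) *v l = G *v (\<chi> j. a $ j * l $ j)"
proof -
  have "(diag_mat a *v l) $ i = a $ i * l $ i" for i
  proof -
    have "(diag_mat a *v l) $ i = (\<Sum>j\<in>UNIV. if i = j then a $ j * l $ j else 0)"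
      unfolding diag_mat_def matrix_vector_mult_def by (simp add: if0_mult)
    then show ?thesis by (simp only: sum.delta' sum.delta finite_UNIV) simp
  qed
  then have "diag_mat a *v l = (\<chi> j. a $ j * l $ j)" by (simp add: vec_eq_iff)
  then show ?thesis by (simp add: matrix_vector_mul_assoc[symmetric])
qed
lemma interval_norm_diag:
  assumes "0 \<le> a"
  shows "interval_norm (X ** diag_mat a) = (\<Sum>r\<in>UNIV. \<Sum>j\<in>UNIV. \<bar>X $ r $ j\<bar> * a $ j)"
proof -
  have e: "(X ** diag_mat a) $ r $ j = X $ r $ j * a $ j" for r j
  proof -
    have "(X ** diag_mat a) $ r $ j = (\<Sum>c\<in>UNIV. if c = j then X $ r $ c * a $ c else 0)"
      unfolding diag_mat_def matrix_matrix_mult_def by (simp add: if0_mult)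
    then show ?thesis by (simp only: sum.delta' sum.delta finite_UNIV) simp
  qed
  have "0 \<le> a $ j" for j using assms by (simp add: less_eq_vec_def)
  then show ?thesis unfolding interval_norm_def e by (simp add: abs_mult)
qed

lemma zono_lp:
  assumes "0 \<le> a"
  shows "zono_obj M xs D G nr R a = lp_obj M xs D G nr R a"
  unfolding zono_obj_def lp_obj_def by (simp only: interval_norm_diag[OF assms])

lemma T_ineq:
  "(- (Tmat k *v f) \<le> (Tmat k ** D ** G) *v b) \<longleftrightarrow>
   (\<forall>j. (f + D *v (G *v b)) $ j \<le> (f + D *v (G *v b)) $ k)"
proof -
  have eq: "(Tmat k ** D ** G) *v b = Tmat k *v (D *v (G *v b))"
    by (simp add: matrix_vector_mul_assoc matrix_mul_assoc)
  have e: "((- (Tmat k *v f)) $ i \<le> ((Tmat k ** D ** G) *v b) $ i) \<longleftrightarrow>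
     ((f + D *v (G *v b)) $ i \<le> (f + D *v (G *v b)) $ k)" for i
    unfolding eq by (simp add: Tmat_mulv) linarith
  show ?thesis by (simp only: less_eq_vec_def e)
qed

lemma classes_axis: "classes_vec (axis k (1::real)) \<subseteq> {k}"
  unfolding classes_vec_def
proof clarify
  fix i assume "\<forall>j. axis k (1::real) $ j \<le> axis k 1 $ i"
  then have "axis k (1::real) $ k \<le> axis k 1 $ i" by blast
  then show "i = k" by (auto simp: axis_def split: if_splits)
qed

lemma classes_axis2: "k \<in> classes_vec (axis k (1::real))"
  unfolding classes_vec_def by (auto simp: axis_def)

lemma class_char:
  assumes "0 \<le> a"
  shows "(k \<in> classes_set (Yset f D G a x)) \<longleftrightarrow>
    (\<exists>b. 0 \<le> a + b \<and> 0 \<le> a - b \<and> - (Tmat k *v f x) \<le> (Tmat k ** D x ** G) *v b)"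
proof
  assume "k \<in> classes_set (Yset f D G a x)"
  then obtain l where l: "\<forall>j. \<bar>l $ j\<bar> \<le> 1"
    and c: "\<forall>j. (f x + D x *v ((G ** diag_mat a) *v l)) $ j \<le> (f x + D x *v ((G ** diag_mat a) *v l)) $ k"
    unfolding classes_set_def Yset_def zonotope_def by auto
  define b where "b = (\<chi> j. a $ j * l $ j)"
  have aj: "0 \<le> a $ j" for j using assms by (simp add: less_eq_vec_def)
  have "\<bar>b $ j\<bar> \<le> a $ j" for j
    using aj[of j] l mult_left_le[of "\<bar>l $ j\<bar>" "a $ j"] by (simp add: b_def abs_mult)
  then have "0 \<le> a $ j + b $ j \<and> 0 \<le> a $ j - b $ j" for j
    using abs_le_iff[of "b $ j" "a $ j"] by fastforce
  then have "0 \<le> a + b \<and> 0 \<le> a - b" by (simp add: less_eq_vec_def)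
  moreover have "- (Tmat k *v f x) \<le> (Tmat k ** D x ** G) *v b"
    using c by (simp add: T_ineq diag_mulv b_def)
  ultimately show "\<exists>b. 0 \<le> a + b \<and> 0 \<le> a - b \<and> - (Tmat k *v f x) \<le> (Tmat k ** D x ** G) *v b"
    by blast
next
  assume "\<exists>b. 0 \<le> a + b \<and> 0 \<le> a - b \<and> - (Tmat k *v f x) \<le> (Tmat k ** D x ** G) *v b"
  then obtain b where b1: "0 \<le> a + b" and b2: "0 \<le> a - b"
    and c: "- (Tmat k *v f x) \<le> (Tmat k ** D x ** G) *v b" by blast
  define l where "l = (\<chi> j. if a $ j = 0 then 0 else b $ j / a $ j)"
  have bj: "\<bar>b $ j\<bar> \<le> a $ j" for j
  proof -
    have "0 \<le> (a + b) $ j" "0 \<le> (a - b) $ j" using b1 b2 unfolding less_eq_vec_def by auto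
    then show ?thesis by simp
  qed
  have l1: "\<forall>j. \<bar>l $ j\<bar> \<le> 1"
  proof
    fix j show "\<bar>l $ j\<bar> \<le> 1"
    proof (cases "a $ j = 0")
      case False
      then have "0 < a $ j" using bj[of j] by linarith
      then show ?thesis using bj[of j] by (simp add: l_def abs_divide divide_le_eq_1)
    qed (simp add: l_def)
  qed
  have "(\<chi> j. a $ j * l $ j) = b"
  proof (rule vec_eq_iff[THEN iffD2, rule_format])
    fix j show "(\<chi> j. a $ j * l $ j) $ j = b $ j"
      using bj[of j] by (auto simp: l_def)
  qed
  then have u: "(G ** diag_mat a) *v l = G *v b" by (simp add: diag_mulv)
  have "f x + D x *v ((G ** diag_mat a) *v l) \<in> Yset f D G a x"
    unfolding Yset_def zonotope_def using l1 by auto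
  moreover have "\<forall>j. (f x + D x *v ((G ** diag_mat a) *v l)) $ j \<le> (f x + D x *v ((G ** diag_mat a) *v l)) $ k"
    using c u by (simp add: T_ineq)
  ultimately show "k \<in> classes_set (Yset f D G a x)"
    unfolding classes_set_def by blast
qed

theorem theorem7:
  fixes f :: "real^'x \<Rightarrow> real^'y"
    and D :: "real^'x \<Rightarrow> real^'u^'y"
    and G :: "real^'v^'u"
    and nr :: nat
    and R :: "nat \<Rightarrow> real^'y^'y"
    and M :: "'m set"
    and xs :: "'m \<Rightarrow> real^'x"
    and ys :: "'m \<Rightarrow> real^'y"
    and k :: "'m \<Rightarrow> 'y"
    and a_opt :: "real^'v"
    and b_opt :: "'m \<Rightarrow> real^'v"
  assumes nr: "nr \<ge> 1"
    and R0: "R 0 = mat 1"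
    and Rorth: "\<forall>i\<in>{1..nr}. orthogonal_matrix (R i)"
    and finM: "finite M"
    and ys: "\<forall>m\<in>M. ys m = axis (k m) 1"
    and feas: "lp_feasible M xs k f D G a_opt b_opt"
    and opt: "\<forall>a b. lp_feasible M xs k f D G a b \<longrightarrow>
                 lp_obj M xs D G nr R a_opt \<le> lp_obj M xs D G nr R a"
  shows "0 \<le> a_opt
    \<and> (\<forall>m\<in>M. classes_vec (ys m) \<subseteq> classes_set (Yset f D G a_opt (xs m)))
    \<and> (\<forall>a. 0 \<le> a \<and> (\<forall>m\<in>M. classes_vec (ys m) \<subseteq> classes_set (Yset f D G a (xs m)))
           \<longrightarrow> zono_obj M xs D G nr R a_opt \<le> zono_obj M xs D G nr R a)"
proof (intro conjI allI impI ballI)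
  show a0: "0 \<le> a_opt" using feas unfolding lp_feasible_def by blast
  fix m assume m: "m \<in> M"
  have "0 \<le> a_opt + b_opt m \<and> 0 \<le> a_opt - b_opt m \<and>
        - (Tmat (k m) *v f (xs m)) \<le> (Tmat (k m) ** D (xs m) ** G) *v b_opt m"
    using feas m unfolding lp_feasible_def by blast
  then have "k m \<in> classes_set (Yset f D G a_opt (xs m))"
    unfolding class_char[OF a0] by blast
  moreover have "classes_vec (ys m) \<subseteq> {k m}"
    using ys m classes_axis[of "k m"] by simp
  ultimately show "classes_vec (ys m) \<subseteq> classes_set (Yset f D G a_opt (xs m))"
    by blast
next
  fix a :: "real^'v"
  assume A: "0 \<le> a \<and> (\<forall>m\<in>M. classes_vec (ys m) \<subseteq> classes_set (Yset f D G a (xs m)))"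
  then have a0: "0 \<le> a" by blast
  have a0': "0 \<le> a_opt" using feas unfolding lp_feasible_def by blast
  have ex: "\<exists>b. 0 \<le> a + b \<and> 0 \<le> a - b \<and> - (Tmat (k m) *v f (xs m)) \<le> (Tmat (k m) ** D (xs m) ** G) *v b"
    if m: "m \<in> M" for m
  proof -
    have "k m \<in> classes_vec (ys m)" using ys m classes_axis2[of "k m"] by simp
    then have "k m \<in> classes_set (Yset f D G a (xs m))"
      using A m by blast
    then show ?thesis unfolding class_char[OF a0] .
  qed
  define bb where "bb = (\<lambda>m. SOME b. 0 \<le> a + b \<and> 0 \<le> a - b \<and> - (Tmat (k m) *v f (xs m)) \<le> (Tmat (k m) ** D (xs m) ** G) *v b)"
  have "0 \<le> a + bb m \<and> 0 \<le> a - bb m \<and> - (Tmat (k m) *v f (xs m)) \<le> (Tmat (k m) ** D (xs m) ** G) *v bb m"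
    if "m \<in> M" for m
    unfolding bb_def by (rule someI_ex[OF ex[OF that]])
  then have "lp_feasible M xs k f D G a bb" using a0 unfolding lp_feasible_def by blast
  then have "lp_obj M xs D G nr R a_opt \<le> lp_obj M xs D G nr R a" using opt by blast
  then show "zono_obj M xs D G nr R a_opt \<le> zono_obj M xs D G nr R a"
    unfolding zono_lp[OF a0] zono_lp[OF a0'] .
qed

end
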